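(* Let $\mathscr F$ be a class of functions $\Omega\to[0,1]$, $\varepsilon>0$ and $d\in\mathbb N$. The following are equivalent: (1) $\mathrm{fat}_\varepsilon(\mathscr F\,\mathrm{mod}\,\omega_1)\le d$; (2) for every countable subclass $\mathscr F'\subseteq\mathscr F$ there is a countable set $N\subseteq\Omega$ (depending on $\mathscr F'$) such that $\mathrm{fat}_\varepsilon(\mathscr F'\restriction(\Omega\setminus N))\le d$.
   Context: A finite $A\subseteq X$ is $\varepsilon$-fat shattered by $\mathscr F$ if there is $h:A\to[0,1]$ such that for every $B\subseteq A$ some $f_B\in\mathscr F$ has $f_B(a)>h(a)+\varepsilon$ for $a\in B$ and $f_B(a)<h(a)-\varepsilon$ for $a\in A\setminus B$; $\mathrm{fat}_\varepsilon(\mathscr F\restriction X)$ is the supremum of sizes of such $A\subseteq X$. $\mathrm{fat}_\varepsilon(\mathscr F\,\mathrm{mod}\,\omega_1)$ is the supremum of $n$ for which there exist uncountable $A_1,\dots,A_n\subseteq\Omega$ and $h:\{1,\dots,n\}\to[0,1]$ such that for every $J\subseteq\{1,\dots,n\}$ there is $f_J\in\mathscr F$ with $f_J(x)>h(i)+\varepsilon$ whenever $i\in J$, $x\in A_i$, and $f_J(x)<h(i)-\varepsilon$ whenever $i\notin J$, $x\in A_i$. *)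

theory Defs
  imports "HOL-Library.Extended_Nat" "HOL-Library.Countable_Set"
begin

definition fat_shattered :: "('a \<Rightarrow> real) set \<Rightarrow> real \<Rightarrow> 'a set \<Rightarrow> bool" where
  "fat_shattered F \<epsilon> A \<longleftrightarrow> finite A \<and>
     (\<exists>h::'a \<Rightarrow> real. (\<forall>a\<in>A. 0 \<le> h a \<and> h a \<le> 1) \<and>
        (\<forall>B\<subseteq>A. \<exists>f\<in>F. (\<forall>a\<in>B. f a > h a + \<epsilon>) \<and> (\<forall>a\<in>A - B. f a < h a - \<epsilon>)))"

definition fat_restr :: "('a \<Rightarrow> real) set \<Rightarrow> real \<Rightarrow> 'a set \<Rightarrow> enat" where
  "fat_restr F \<epsilon> X = Sup {enat (card A) | A. A \<subseteq> X \<and> fat_shattered F \<epsilon> A}"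

definition fat_shattered_mod_omega1 :: "('a \<Rightarrow> real) set \<Rightarrow> real \<Rightarrow> nat \<Rightarrow> bool" where
  "fat_shattered_mod_omega1 F \<epsilon> n \<longleftrightarrow>
     (\<exists>(A::nat \<Rightarrow> 'a set) (h::nat \<Rightarrow> real).
        (\<forall>i\<in>{1..n}. uncountable (A i)) \<and> (\<forall>i\<in>{1..n}. 0 \<le> h i \<and> h i \<le> 1) \<and>
        (\<forall>J\<subseteq>{1..n}. \<exists>f\<in>F.
            (\<forall>i\<in>J. \<forall>x\<in>A i. f x > h i + \<epsilon>) \<and>
            (\<forall>i\<in>{1..n} - J. \<forall>x\<in>A i. f x < h i - \<epsilon>)))"

definition fat_mod_omega1 :: "('a \<Rightarrow> real) set \<Rightarrow> real \<Rightarrow> enat" where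
  "fat_mod_omega1 F \<epsilon> = Sup {enat n | n. fat_shattered_mod_omega1 F \<epsilon> n}"

end

theory Submission
  imports Defs "HOL-Library.FuncSet"
begin

lemma my_countable_PiE:
  "finite I \<Longrightarrow> (\<And>i. i \<in> I \<Longrightarrow> countable (F i)) \<Longrightarrow> countable (Pi\<^sub>E I F)"
  by (induct I arbitrary: F rule: finite_induct) (auto simp: PiE_insert_eq)

lemma fat_sub:
  assumes "fat_shattered F \<epsilon> A" "A' \<subseteq> A"
  shows "fat_shattered F \<epsilon> A'"
proof -
  from assms(1) obtain h where fin: "finite A" and h01: "\<forall>a\<in>A. 0 \<le> h a \<and> h a \<le> 1"
    and sh: "\<forall>B\<subseteq>A. \<exists>f\<in>F. (\<forall>a\<in>B. f a > h a + \<epsilon>) \<and> (\<forall>a\<in>A - B. f a < h a - \<epsilon>)"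
    unfolding fat_shattered_def by blast
  show ?thesis unfolding fat_shattered_def
  proof (intro conjI exI[of _ h] allI impI)
    show "finite A'" using fin assms(2) finite_subset by blast
    show "\<forall>a\<in>A'. 0 \<le> h a \<and> h a \<le> 1" using h01 assms(2) by blast
    fix B assume "B \<subseteq> A'"
    then have "B \<subseteq> A" using assms(2) by blast
    then obtain f where "f \<in> F" "\<forall>a\<in>B. f a > h a + \<epsilon>" "\<forall>a\<in>A - B. f a < h a - \<epsilon>"
      using sh by blast
    then show "\<exists>f\<in>F. (\<forall>a\<in>B. f a > h a + \<epsilon>) \<and> (\<forall>a\<in>A' - B. f a < h a - \<epsilon>)"
      using assms(2) by blast
  qed
qed

lemma rat_near:
  fixes U :: "real set"
  assumes "open U" "x \<in> U" "0 \<le> x" "x \<le> 1"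
  shows "\<exists>q\<in>\<rat> \<inter> {0..1}. q \<in> U"
proof -
  obtain e where e: "e > 0" "\<And>y. dist y x < e \<Longrightarrow> y \<in> U"
    using assms(1,2) open_dist by metis
  show ?thesis
  proof (cases "x < 1")
    case True
    then have "x < min (x + e) 1" using e by simp
    then obtain q where "q \<in> \<rat>" "x < q" "q < min (x + e) 1" using Rats_dense_in_real by blast
    moreover have "dist q x < e" using calculation by (simp add: dist_real_def)
    ultimately show ?thesis using e assms by force
  next
    case False
    have "max (x - e) 0 < x" using e False by simp
    then obtain q where "q \<in> \<rat>" "max (x - e) 0 < q" "q < x" using Rats_dense_in_real by blast
    moreover have "dist q x < e" using calculation by (simp add: dist_real_def)
    ultimately show ?thesis using e assms by force
  qed
qed

lemma fat_rat:
  assumes "fat_shattered F \<epsilon> A"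
  shows "\<exists>h. (\<forall>a\<in>A. h a \<in> \<rat> \<inter> {0..1}) \<and>
     (\<forall>B\<subseteq>A. \<exists>f\<in>F. (\<forall>a\<in>B. f a > h a + \<epsilon>) \<and> (\<forall>a\<in>A - B. f a < h a - \<epsilon>))"
proof -
  from assms obtain h where fin: "finite A" and h01: "\<forall>a\<in>A. 0 \<le> h a \<and> h a \<le> 1"
    and sh: "\<forall>B\<subseteq>A. \<exists>f\<in>F. (\<forall>a\<in>B. f a > h a + \<epsilon>) \<and> (\<forall>a\<in>A - B. f a < h a - \<epsilon>)"
    unfolding fat_shattered_def by blast
  obtain fB where fB: "\<And>B. B \<subseteq> A \<Longrightarrow> fB B \<in> F \<and> (\<forall>a\<in>B. fB B a > h a + \<epsilon>) \<and> (\<forall>a\<in>A - B. fB B a < h a - \<epsilon>)"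
    using sh by metis
  define V where "V = (\<lambda>a B. if a \<in> B then {..<fB B a - \<epsilon>} else {fB B a + \<epsilon><..})"
  define U where "U = (\<lambda>a. \<Inter>B\<in>Pow A. V a B)"
  have "\<forall>a\<in>A. \<exists>q. q \<in> \<rat> \<inter> {0..1} \<and> q \<in> U a"
  proof
    fix a assume a: "a \<in> A"
    have "open (U a)" unfolding U_def V_def using fin by (intro open_INT) auto
    moreover have "h a \<in> U a" unfolding U_def
    proof (rule INT_I)
      fix B assume "B \<in> Pow A"
      then have B: "B \<subseteq> A" by simp
      show "h a \<in> V a B"
      proof (cases "a \<in> B")
        case True
        then have "fB B a > h a + \<epsilon>" using fB[OF B] by blast
        then show ?thesis using True unfolding V_def by simp
      next
        case False
        then have "fB B a < h a - \<epsilon>" using fB[OF B] a by blast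
        then show ?thesis using False unfolding V_def by simp
      qed
    qed
    ultimately show "\<exists>q. q \<in> \<rat> \<inter> {0..1} \<and> q \<in> U a"
      using rat_near[of "U a" "h a"] h01 a by blast
  qed
  then obtain h' where h': "\<forall>a\<in>A. h' a \<in> \<rat> \<inter> {0..1} \<and> h' a \<in> U a" by metis
  show ?thesis
  proof (intro exI[of _ h'] conjI allI impI)
    show "\<forall>a\<in>A. h' a \<in> \<rat> \<inter> {0..1}" using h' by blast
    fix B assume B: "B \<subseteq> A"
    have "\<forall>a\<in>B. fB B a > h' a + \<epsilon>"
    proof
      fix a assume "a \<in> B"
      then have "h' a \<in> V a B" using h' B unfolding U_def by blast
      then show "fB B a > h' a + \<epsilon>" using \<open>a \<in> B\<close> unfolding V_def by simp
    qed
    moreover have "\<forall>a\<in>A - B. fB B a < h' a - \<epsilon>"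
    proof
      fix a assume "a \<in> A - B"
      then have "h' a \<in> V a B" using h' B unfolding U_def by blast
      then show "fB B a < h' a - \<epsilon>" using \<open>a \<in> A - B\<close> unfolding V_def by simp
    qed
    ultimately show "\<exists>f\<in>F. (\<forall>a\<in>B. f a > h' a + \<epsilon>) \<and> (\<forall>a\<in>A - B. f a < h' a - \<epsilon>)"
      using fB[OF B] by blast
  qed
qed

theorem mainTheorem18:
  fixes F :: "('a \<Rightarrow> real) set" and \<epsilon> :: real and d :: nat
  assumes "\<forall>f\<in>F. \<forall>x. 0 \<le> f x \<and> f x \<le> 1"
    and "\<epsilon> > 0"
  shows "fat_mod_omega1 F \<epsilon> \<le> enat d \<longleftrightarrow>
    (\<forall>F'. F' \<subseteq> F \<and> countable F' \<longrightarrow>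
       (\<exists>N. countable N \<and> fat_restr F' \<epsilon> (UNIV - N) \<le> enat d))"
proof
  assume H: "fat_mod_omega1 F \<epsilon> \<le> enat d"
  show "\<forall>F'. F' \<subseteq> F \<and> countable F' \<longrightarrow>
       (\<exists>N. countable N \<and> fat_restr F' \<epsilon> (UNIV - N) \<le> enat d)"
  proof (intro allI impI)
    fix F' assume F': "F' \<subseteq> F \<and> countable F'"
    define n where "n = Suc d"
    define Q where "Q = \<rat> \<inter> {0..1::real}"
    define T where "T = ({1..n} \<rightarrow>\<^sub>E Q) \<times> (Pow {1..n} \<rightarrow>\<^sub>E F')"
    define AS :: "(nat\<Rightarrow>real) \<times> (nat set \<Rightarrow> 'a \<Rightarrow> real) \<Rightarrow> nat \<Rightarrow> 'a set" where "AS = (\<lambda>t i.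
       {x. \<forall>J\<subseteq>{1..n}. (i\<in>J \<longrightarrow> snd t J x > fst t i + \<epsilon>) \<and> (i\<notin>J \<longrightarrow> snd t J x < fst t i - \<epsilon>)})"
    have cT: "countable T" unfolding T_def Q_def
      using F' countable_rat
      by (intro countable_SIGMA my_countable_PiE) auto
    show "\<exists>N. countable N \<and> fat_restr F' \<epsilon> (UNIV - N) \<le> enat d"
    proof (cases "\<exists>t\<in>T. \<forall>i\<in>{1..n}. uncountable (AS t i)")
      case True
      then obtain t where t: "t \<in> T" "\<forall>i\<in>{1..n}. uncountable (AS t i)" by blast
      have "fat_shattered_mod_omega1 F \<epsilon> n" unfolding fat_shattered_mod_omega1_def
      proof (intro exI[of _ "AS t"] exI[of _ "fst t"] conjI allI impI)
        show "\<forall>i\<in>{1..n}. uncountable (AS t i)" using t by blast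
        show "\<forall>i\<in>{1..n}. 0 \<le> fst t i \<and> fst t i \<le> 1" using t(1) unfolding T_def Q_def
          by (auto simp: PiE_iff)
        fix J assume J: "J \<subseteq> {1..n}"
        have "snd t J \<in> F" using t(1) J F' unfolding T_def by (auto simp: PiE_iff)
        then show "\<exists>f\<in>F. (\<forall>i\<in>J. \<forall>x\<in>AS t i. f x > fst t i + \<epsilon>) \<and>
            (\<forall>i\<in>{1..n} - J. \<forall>x\<in>AS t i. f x < fst t i - \<epsilon>)"
          using J unfolding AS_def by auto
      qed
      then have "enat n \<le> fat_mod_omega1 F \<epsilon>" unfolding fat_mod_omega1_def
        by (intro Sup_upper) auto
      from order_trans[OF this H] have False by (simp add: n_def)
      then show ?thesis ..
    next
      case False
      define N where "N = (\<Union>t\<in>T. \<Union>i\<in>{i\<in>{1..n}. countable (AS t i)}. AS t i)"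
      have cN: "countable N" unfolding N_def using cT by (intro countable_UN) auto
      have "fat_restr F' \<epsilon> (UNIV - N) \<le> enat d"
        unfolding fat_restr_def
      proof (rule Sup_least, clarify)
        fix A assume A: "A \<subseteq> UNIV - N" "fat_shattered F' \<epsilon> A"
        show "enat (card A) \<le> enat d"
        proof (rule ccontr)
          assume "\<not> enat (card A) \<le> enat d"
          then have "n \<le> card A" by (simp add: n_def)
          then obtain A' where A': "A' \<subseteq> A" "card A' = n" "finite A'"
            using obtain_subset_with_card_n by metis
          have "fat_shattered F' \<epsilon> A'" using fat_sub A A' by blast
          then obtain h where hQ: "\<forall>a\<in>A'. h a \<in> Q"
            and hs: "\<forall>B\<subseteq>A'. \<exists>f\<in>F'. (\<forall>a\<in>B. f a > h a + \<epsilon>) \<and> (\<forall>a\<in>A' - B. f a < h a - \<epsilon>)"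
            using fat_rat unfolding Q_def by blast
          obtain fB where fB: "\<And>B. B \<subseteq> A' \<Longrightarrow> fB B \<in> F' \<and> (\<forall>a\<in>B. fB B a > h a + \<epsilon>) \<and> (\<forall>a\<in>A' - B. fB B a < h a - \<epsilon>)"
            using hs by metis
          obtain e where e: "bij_betw e {1..n} A'"
            using finite_same_card_bij[of "{1..n}" A'] A' by auto
          define t where "t = (restrict (\<lambda>i. h (e i)) {1..n}, restrict (\<lambda>J. fB (e ` J)) (Pow {1..n}))"
          have eA: "\<And>i. i \<in> {1..n} \<Longrightarrow> e i \<in> A'" using e bij_betwE by blast
          have eJ: "\<And>J. J \<subseteq> {1..n} \<Longrightarrow> e ` J \<subseteq> A'" using eA by blast
          have t1: "restrict (\<lambda>i. h (e i)) {1..n} \<in> {1..n} \<rightarrow>\<^sub>E Q"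
            using hQ eA by (simp add: restrict_PiE_iff)
          have "\<forall>J\<in>Pow {1..n}. fB (e ` J) \<in> F'" using fB eJ by blast
          then have t2: "restrict (\<lambda>J. fB (e ` J)) (Pow {1..n}) \<in> Pow {1..n} \<rightarrow>\<^sub>E F'"
            by (simp add: restrict_PiE_iff)
          have "t \<in> T" unfolding t_def T_def using t1 t2 by blast
          have mem: "\<forall>i\<in>{1..n}. e i \<in> AS t i"
          proof
            fix i assume i: "i \<in> {1..n}"
            show "e i \<in> AS t i" unfolding AS_def mem_Collect_eq
            proof (intro allI impI conjI)
              fix J assume J: "J \<subseteq> {1..n}"
              have ft: "fst t i = h (e i)" using i unfolding t_def by simp
              have st: "snd t J = fB (e ` J)" using J unfolding t_def by simp
              show "i \<in> J \<Longrightarrow> snd t J (e i) > fst t i + \<epsilon>"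
                using fB[OF eJ[OF J]] unfolding ft st by blast
              assume "i \<notin> J"
              then have "e i \<in> A' - e ` J"
                using e i J eA[OF i] unfolding bij_betw_def inj_on_def by blast
              then show "snd t J (e i) < fst t i - \<epsilon>"
                using fB[OF eJ[OF J]] unfolding ft st by blast
            qed
          qed
          from False \<open>t \<in> T\<close> obtain i where i: "i \<in> {1..n}" "countable (AS t i)" by blast
          then have "e i \<in> N" unfolding N_def
            by (intro UN_I[OF \<open>t \<in> T\<close>] UN_I[of i]) (use mem in auto)
          moreover have "e i \<in> A" using eA[OF i(1)] A' by blast
          ultimately show False using A by blast
        qed
      qed
      then show ?thesis using cN by blast
    qed
  qed
next
  assume H2: "\<forall>F'. F' \<subseteq> F \<and> countable F' \<longrightarrow>
       (\<exists>N. countable N \<and> fat_restr F' \<epsilon> (UNIV - N) \<le> enat d)"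
  show "fat_mod_omega1 F \<epsilon> \<le> enat d" unfolding fat_mod_omega1_def
  proof (rule Sup_least, clarify)
    fix n assume "fat_shattered_mod_omega1 F \<epsilon> n"
    then obtain A h where unc: "\<forall>i\<in>{1..n}. uncountable (A i)"
      and h01: "\<forall>i\<in>{1..n}. 0 \<le> h i \<and> h i \<le> 1"
      and sh: "\<forall>J\<subseteq>{1..n}. \<exists>f\<in>F. (\<forall>i\<in>J. \<forall>x\<in>A i. f x > h i + \<epsilon>) \<and>
            (\<forall>i\<in>{1..n} - J. \<forall>x\<in>A i. f x < h i - \<epsilon>)"
      unfolding fat_shattered_mod_omega1_def by (elim exE conjE) (rule that)
    obtain f where f: "\<And>J. J \<subseteq> {1..n} \<Longrightarrow> f J \<in> F \<and> (\<forall>i\<in>J. \<forall>x\<in>A i. f J x > h i + \<epsilon>) \<and>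
            (\<forall>i\<in>{1..n} - J. \<forall>x\<in>A i. f J x < h i - \<epsilon>)"
    proof -
      have "\<forall>J. \<exists>g. J \<subseteq> {1..n} \<longrightarrow> g \<in> F \<and> (\<forall>i\<in>J. \<forall>x\<in>A i. g x > h i + \<epsilon>) \<and>
            (\<forall>i\<in>{1..n} - J. \<forall>x\<in>A i. g x < h i - \<epsilon>)" using sh by blast
      from choice[OF this] obtain g where "\<forall>J. J \<subseteq> {1..n} \<longrightarrow> g J \<in> F \<and> (\<forall>i\<in>J. \<forall>x\<in>A i. g J x > h i + \<epsilon>) \<and>
            (\<forall>i\<in>{1..n} - J. \<forall>x\<in>A i. g J x < h i - \<epsilon>)" by blast
      then show ?thesis using that by blast
    qed
    define F' where "F' = f ` Pow {1..n}"
    have "F' \<subseteq> F \<and> countable F'" unfolding F'_def using f by (auto intro: countable_finite)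
    then obtain N where N: "countable N" "fat_restr F' \<epsilon> (UNIV - N) \<le> enat d" using H2 by blast
    have "\<forall>i\<in>{1..n}. \<exists>x. x \<in> A i \<and> x \<notin> N"
    proof
      fix i assume "i \<in> {1..n}"
      then have "uncountable (A i - N)" using unc N(1) uncountable_minus_countable by blast
      then show "\<exists>x. x \<in> A i \<and> x \<notin> N" by (metis Diff_iff countable_empty ex_in_conv)
    qed
    then have "\<forall>i. \<exists>x. i \<in> {1..n} \<longrightarrow> x \<in> A i \<and> x \<notin> N" by blast
    from choice[OF this] obtain a where a: "\<forall>i\<in>{1..n}. a i \<in> A i \<and> a i \<notin> N" by blast
    have inj: "inj_on a {1..n}"
    proof (rule inj_onI, rule ccontr)
      fix i j assume ij: "i \<in> {1..n}" "j \<in> {1..n}" "a i = a j" "i \<noteq> j"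
      have xi: "a i \<in> A i" using a ij(1) by blast
      have xj: "a i \<in> A j" using a ij(2,3) by metis
      have "f {i} (a i) > h i + \<epsilon>" using f[of "{i}"] ij(1) xi by blast
      moreover have "f {i} (a i) < h j - \<epsilon>" using f[of "{i}"] ij xj by blast
      moreover have "f {j} (a i) > h j + \<epsilon>" using f[of "{j}"] ij(2) xj by blast
      moreover have "f {j} (a i) < h i - \<epsilon>" using f[of "{j}"] ij xi by blast
      ultimately show False using assms(2) by linarith
    qed
    define S where "S = a ` {1..n}"
    have "fat_shattered F' \<epsilon> S" unfolding fat_shattered_def
    proof (intro conjI exI[of _ "\<lambda>x. h (inv_into {1..n} a x)"] allI impI)
      show "finite S" unfolding S_def by simp
      show "\<forall>x\<in>S. 0 \<le> h (inv_into {1..n} a x) \<and> h (inv_into {1..n} a x) \<le> 1"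
        unfolding S_def using h01 inj by auto
      fix B assume B: "B \<subseteq> S"
      define J where "J = {i\<in>{1..n}. a i \<in> B}"
      have J: "J \<subseteq> {1..n}" unfolding J_def by blast
      have "f J \<in> F'" unfolding F'_def using J by blast
      moreover have "\<forall>x\<in>B. f J x > h (inv_into {1..n} a x) + \<epsilon>"
      proof
        fix x assume "x \<in> B"
        then obtain i where i: "i \<in> {1..n}" "x = a i" using B unfolding S_def by blast
        then have "i \<in> J" using \<open>x \<in> B\<close> unfolding J_def by blast
        then show "f J x > h (inv_into {1..n} a x) + \<epsilon>"
          using f[OF J] i a inv_into_f_f[OF inj i(1)] by auto
      qed
      moreover have "\<forall>x\<in>S - B. f J x < h (inv_into {1..n} a x) - \<epsilon>"
      proof
        fix x assume x: "x \<in> S - B"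
        then obtain i where i: "i \<in> {1..n}" "x = a i" unfolding S_def by blast
        then have "i \<in> {1..n} - J" using x unfolding J_def by blast
        then show "f J x < h (inv_into {1..n} a x) - \<epsilon>"
          using f[OF J] i a inv_into_f_f[OF inj i(1)] by auto
      qed
      ultimately show "\<exists>g\<in>F'. (\<forall>x\<in>B. g x > h (inv_into {1..n} a x) + \<epsilon>) \<and>
          (\<forall>x\<in>S - B. g x < h (inv_into {1..n} a x) - \<epsilon>)" by blast
    qed
    moreover have "S \<subseteq> UNIV - N" unfolding S_def using a by blast
    ultimately have "enat (card S) \<le> fat_restr F' \<epsilon> (UNIV - N)"
      unfolding fat_restr_def by (intro Sup_upper) blast
    moreover have "card S = n" unfolding S_def using card_image[OF inj] by simp
    ultimately show "enat n \<le> enat d" using N(2) order_trans by metis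
  qed
qed

end
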